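(* Let $g:\mathbb{R}^m\to\overline{\mathbb{R}}$ be a polyhedral function, written in the form $$g(z)=\max_{j\in J}\{\langle a^j,z\rangle-\alpha_j\}+\delta_{\mathrm{dom}\, g}(z),\qquad \mathrm{dom}\, g=\{z\in\mathbb{R}^m\mid \langle b^i,z\rangle\le\beta_i,\ i\in I\},$$ with $J=\{1,\dots,l\}$, $I=\{1,\dots,s\}$, $a^j,b^i\in\mathbb{R}^m$, $\alpha_j,\beta_i\in\mathbb{R}$. Let $(\bar z,\bar\lambda)\in\mathrm{gph}\,\partial g$. Then there exists $r>0$ such that for every decomposition $$\bar\lambda=\sum_{j\in J(\bar z)}\bar\sigma_j a^j+\sum_{i\in I(\bar z)}\bar\tau_i b^i,\qquad \bar\sigma_j,\bar\tau_i\ge 0,\ \sum_{j\in J(\bar z)}\bar\sigma_j=1,$$ and every $(z,\lambda)\in(\mathrm{gph}\,\partial g)\cap\mathbb{B}_r(\bar z,\bar\lambda)$, we have $$J_+(\bar z,\bar\sigma)\subset J(z)\quad\text{and}\quad I_+(\bar z,\bar\tau)\subset I(z).$$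
   Context: A proper function $g:\mathbb{R}^m\to\overline{\mathbb{R}}=[-\infty,\infty]$ is polyhedral if its epigraph is a polyhedral convex set; every such function admits a representation as in the claim. $\delta_C$ denotes the indicator function of $C$ ($0$ on $C$, $+\infty$ outside). For $j\in J$ set $C_j=\{z\in\mathrm{dom}\, g\mid g(z)=\langle a^j,z\rangle-\alpha_j\}$. For $z\in\mathrm{dom}\, g$ define the active index sets $I(z)=\{i\in I\mid\langle b^i,z\rangle=\beta_i\}$ and $J(z)=\{j\in J\mid z\in C_j\}$. The subdifferential $\partial g$ is that of convex analysis; one has $\partial g(\bar z)=\mathrm{co}\{a^j\mid j\in J(\bar z)\}+\mathrm{cone}\{b^i\mid i\in I(\bar z)\}$, so every $\bar\lambda\in\partial g(\bar z)$ has (generally non-unique) decompositions as in the claim. Given such a decomposition, $J_+(\bar z,\bar\sigma)=\{j\in J(\bar z)\mid\bar\sigma_j>0\}$ and $I_+(\bar z,\bar\tau)=\{i\in I(\bar z)\mid \bar\tau_i>0\}$. $\mathbb{B}_r(x)$ is the closed ball of radius $r$ centered at $x$; on $\mathbb{R}^m\times\mathbb{R}^m$ the Euclidean norm $\|(w,u)\|=\sqrt{\|w\|^2+\|u\|^2}$ is used. *)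

theory Defs
  imports "HOL-Analysis.Analysis"
begin

definition polyfun ::
  "(nat \<Rightarrow> real^'m) \<Rightarrow> (nat \<Rightarrow> real) \<Rightarrow> (nat \<Rightarrow> real^'m) \<Rightarrow> (nat \<Rightarrow> real)
     \<Rightarrow> nat \<Rightarrow> nat \<Rightarrow> real^'m \<Rightarrow> ereal" where
  "polyfun a \<alpha> b \<beta> l s z =
     (if (\<forall>i\<in>{1..s}. b i \<bullet> z \<le> \<beta> i)
      then ereal (MAX j\<in>{1..l}. a j \<bullet> z - \<alpha> j) else \<infinity>)"

definition edom :: "('a \<Rightarrow> ereal) \<Rightarrow> 'a set" where
  "edom f = {z. f z < \<infinity>}"

definition subdiff :: "('a::real_inner \<Rightarrow> ereal) \<Rightarrow> 'a \<Rightarrow> 'a set" where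
  "subdiff f x = {v. \<bar>f x\<bar> \<noteq> \<infinity> \<and> (\<forall>y. f x + ereal (v \<bullet> (y - x)) \<le> f y)}"

definition gph_subdiff :: "('a::real_inner \<Rightarrow> ereal) \<Rightarrow> ('a \<times> 'a) set" where
  "gph_subdiff f = {(z, v). v \<in> subdiff f z}"

definition actI :: "(nat \<Rightarrow> 'a::real_inner) \<Rightarrow> (nat \<Rightarrow> real) \<Rightarrow> nat \<Rightarrow> 'a \<Rightarrow> nat set" where
  "actI b \<beta> s z = {i\<in>{1..s}. b i \<bullet> z = \<beta> i}"

definition actJ :: "('a \<Rightarrow> ereal) \<Rightarrow> (nat \<Rightarrow> 'a::real_inner) \<Rightarrow> (nat \<Rightarrow> real) \<Rightarrow> nat \<Rightarrow> 'a \<Rightarrow> nat set" where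
  "actJ g a \<alpha> l z = {j\<in>{1..l}. z \<in> edom g \<and> g z = ereal (a j \<bullet> z - \<alpha> j)}"

end

theory Submission
  imports Defs
begin

definition Pc :: "(nat \<Rightarrow> 'a::euclidean_space) \<Rightarrow> (nat \<Rightarrow> 'a) \<Rightarrow> nat set \<Rightarrow> nat set \<Rightarrow> ('a \<times> real) set" where
  "Pc a b J I = {x. \<exists>c d. (\<forall>j\<in>J. 0 \<le> c j) \<and> (\<forall>i\<in>I. 0 \<le> d i) \<and>
      x = (\<Sum>j\<in>J. c j *\<^sub>R (a j, 1)) + (\<Sum>i\<in>I. d i *\<^sub>R (b i, 0))}"

lemma cone_sum_mem:
  assumes "convex_cone K" "finite A" "\<And>x. x \<in> A \<Longrightarrow> 0 \<le> c x \<and> f x \<in> K"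
  shows "(\<Sum>x\<in>A. c x *\<^sub>R f x) \<in> K"
  using assms(2,3)
proof (induction A rule: finite_induct)
  case empty
  then show ?case using assms(1) by (simp add: convex_cone_contains_0)
next
  case (insert x F)
  then show ?case using assms(1) by (simp add: convex_cone_add convex_cone_scaleR)
qed

lemma sum_delta_scale:
  fixes f :: "nat \<Rightarrow> 'b::real_vector"
  assumes "finite A" "j \<in> A"
  shows "(\<Sum>k\<in>A. (if k = j then 1 else 0) *\<^sub>R f k) = f j"
proof -
  have "(\<Sum>k\<in>A. (if k = j then 1 else 0) *\<^sub>R f k) = (\<Sum>k\<in>A. if k = j then f k else 0)"
    by (rule sum.cong) auto
  also have "\<dots> = f j" using assms by simp
  finally show ?thesis .
qed

lemma Pc_hull:
  assumes "finite J" "finite I"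
  shows "Pc a b J I = convex_cone hull ((\<lambda>j. (a j, 1)) ` J \<union> (\<lambda>i. (b i, 0)) ` I)"
    (is "_ = convex_cone hull ?T")
proof
  show "Pc a b J I \<subseteq> convex_cone hull ?T"
  proof
    fix x assume "x \<in> Pc a b J I"
    then obtain c d where cd: "\<forall>j\<in>J. 0 \<le> c j" "\<forall>i\<in>I. 0 \<le> d i"
      "x = (\<Sum>j\<in>J. c j *\<^sub>R (a j, 1)) + (\<Sum>i\<in>I. d i *\<^sub>R (b i, 0))"
      unfolding Pc_def by blast
    have ia: "(a j, 1) \<in> convex_cone hull ?T" if "j \<in> J" for j
      by (rule hull_inc) (use that in blast)
    have ib: "(b i, 0) \<in> convex_cone hull ?T" if "i \<in> I" for i
      by (rule hull_inc) (use that in blast)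
    have 1: "(\<Sum>j\<in>J. c j *\<^sub>R (a j, 1)) \<in> convex_cone hull ?T"
      by (rule cone_sum_mem[OF convex_cone_convex_cone_hull assms(1)]) (simp add: cd(1) ia)
    have 2: "(\<Sum>i\<in>I. d i *\<^sub>R (b i, 0)) \<in> convex_cone hull ?T"
      by (rule cone_sum_mem[OF convex_cone_convex_cone_hull assms(2)]) (simp add: cd(2) ib)
    show "x \<in> convex_cone hull ?T" unfolding cd(3) by (rule convex_cone_hull_add[OF 1 2])
  qed
next
  have cc: "convex_cone (Pc a b J I)"
    unfolding convex_cone_iff
  proof (intro conjI ballI allI impI)
    show "0 \<in> Pc a b J I" unfolding Pc_def
      by (rule CollectI, rule exI[of _ "\<lambda>_. 0"], rule exI[of _ "\<lambda>_. 0"]) (simp add: zero_prod_def[symmetric])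
  next
    fix x y assume "x \<in> Pc a b J I" "y \<in> Pc a b J I"
    then obtain c d c' d' where cd: "\<forall>j\<in>J. 0 \<le> c j" "\<forall>i\<in>I. 0 \<le> d i"
      "x = (\<Sum>j\<in>J. c j *\<^sub>R (a j, 1)) + (\<Sum>i\<in>I. d i *\<^sub>R (b i, 0))"
      and cd': "\<forall>j\<in>J. 0 \<le> c' j" "\<forall>i\<in>I. 0 \<le> d' i"
      "y = (\<Sum>j\<in>J. c' j *\<^sub>R (a j, 1)) + (\<Sum>i\<in>I. d' i *\<^sub>R (b i, 0))"
      unfolding Pc_def by blast
    show "x + y \<in> Pc a b J I" unfolding Pc_def
      apply (rule CollectI, rule exI[of _ "\<lambda>j. c j + c' j"], rule exI[of _ "\<lambda>i. d i + d' i"], intro conjI)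
      subgoal using cd cd' by simp
      subgoal using cd cd' by simp
      subgoal unfolding cd(3) cd'(3) scaleR_add_left sum.distrib by (simp only: add_ac)
      done
  next
    fix x and t :: real assume "x \<in> Pc a b J I" "0 \<le> t"
    then obtain c d where cd: "\<forall>j\<in>J. 0 \<le> c j" "\<forall>i\<in>I. 0 \<le> d i"
      "x = (\<Sum>j\<in>J. c j *\<^sub>R (a j, 1)) + (\<Sum>i\<in>I. d i *\<^sub>R (b i, 0))"
      unfolding Pc_def by blast
    show "t *\<^sub>R x \<in> Pc a b J I" unfolding Pc_def
      apply (rule CollectI, rule exI[of _ "\<lambda>j. t * c j"], rule exI[of _ "\<lambda>i. t * d i"])
      apply (intro conjI)
      subgoal using cd \<open>0 \<le> t\<close> by simp
      subgoal using cd \<open>0 \<le> t\<close> by simp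
      subgoal unfolding cd(3) scaleR_add_right scaleR_sum_right scaleR_scaleR by (rule refl)
      done
  qed
  have T: "?T \<subseteq> Pc a b J I"
  proof
    fix x assume "x \<in> ?T"
    then consider j where "j \<in> J" "x = (a j, 1)" | i where "i \<in> I" "x = (b i, 0)" by blast
    then show "x \<in> Pc a b J I"
    proof cases
      case 1
      show ?thesis unfolding Pc_def 1(2)
        apply (rule CollectI, rule exI[of _ "\<lambda>k. if k = j then 1 else 0"], rule exI[of _ "\<lambda>_. 0"])
        using assms 1(1) by (simp add: sum_delta_scale zero_prod_def[symmetric] del: scaleR_Pair)
    next
      case 2
      show ?thesis unfolding Pc_def 2(2)
        apply (rule CollectI, rule exI[of _ "\<lambda>_. 0"], rule exI[of _ "\<lambda>k. if k = i then 1 else 0"])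
        using assms 2(1) by (simp add: sum_delta_scale zero_prod_def[symmetric] del: scaleR_Pair)
    qed
  qed
  show "convex_cone hull ?T \<subseteq> Pc a b J I"
    by (rule hull_minimal[where S=convex_cone, OF T cc])
qed

lemma closed_Pc: "finite J \<Longrightarrow> finite I \<Longrightarrow> closed (Pc a b J I)"
  by (simp add: Pc_hull closed_convex_cone_hull)

lemma convex_Pc: "finite J \<Longrightarrow> finite I \<Longrightarrow> convex (Pc a b J I)"
  by (simp add: Pc_hull convex_convex_cone_hull)

lemma cone_Pc: "finite J \<Longrightarrow> finite I \<Longrightarrow> x \<in> Pc a b J I \<Longrightarrow> 0 \<le> t \<Longrightarrow> t *\<^sub>R x \<in> Pc a b J I"
  by (simp add: Pc_hull convex_cone_hull_mul)

lemma zero_Pc: "finite J \<Longrightarrow> finite I \<Longrightarrow> 0 \<in> Pc a b J I"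
  by (simp add: Pc_hull convex_cone_hull_contains_0)


abbreviation Mx :: "(nat \<Rightarrow> real^'m) \<Rightarrow> (nat \<Rightarrow> real) \<Rightarrow> nat \<Rightarrow> real^'m \<Rightarrow> real" where
  "Mx a \<alpha> l z \<equiv> (MAX j\<in>{1..l}. a j \<bullet> z - \<alpha> j)"

lemma Mx_ge: "j \<in> {1..l} \<Longrightarrow> a j \<bullet> z - \<alpha> j \<le> Mx a \<alpha> l z"
  by (rule Max_ge) auto

lemma Mx_le: "1 \<le> l \<Longrightarrow> (\<And>j. j \<in> {1..l} \<Longrightarrow> a j \<bullet> z - \<alpha> j \<le> c) \<Longrightarrow> Mx a \<alpha> l z \<le> c"
  by (subst Max_le_iff) auto

lemma subdiff_dom:
  assumes "v \<in> subdiff (polyfun a \<alpha> b \<beta> l s) z"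
  shows "\<forall>i\<in>{1..s}. b i \<bullet> z \<le> \<beta> i"
    and "polyfun a \<alpha> b \<beta> l s z = ereal (Mx a \<alpha> l z)"
    and "\<And>y. Mx a \<alpha> l z + v \<bullet> (y - z) \<le> polyfun a \<alpha> b \<beta> l s y"
proof -
  show d: "\<forall>i\<in>{1..s}. b i \<bullet> z \<le> \<beta> i"
    using assms by (auto simp: subdiff_def polyfun_def split: if_splits)
  then show e: "polyfun a \<alpha> b \<beta> l s z = ereal (Mx a \<alpha> l z)"
    by (simp add: polyfun_def)
  fix y
  from assms have "polyfun a \<alpha> b \<beta> l s z + ereal (v \<bullet> (y - z)) \<le> polyfun a \<alpha> b \<beta> l s y"
    by (auto simp: subdiff_def)
  then show "Mx a \<alpha> l z + v \<bullet> (y - z) \<le> polyfun a \<alpha> b \<beta> l s y"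
    by (simp add: e)
qed

lemma polyfun_in_dom: "\<forall>i\<in>{1..s}. b i \<bullet> z \<le> \<beta> i \<Longrightarrow> polyfun a \<alpha> b \<beta> l s z = ereal (Mx a \<alpha> l z)"
  by (simp add: polyfun_def)

lemma actJ_eq:
  assumes "\<forall>i\<in>{1..s}. b i \<bullet> z \<le> \<beta> i"
  shows "actJ (polyfun a \<alpha> b \<beta> l s) a \<alpha> l z = {j\<in>{1..l}. a j \<bullet> z - \<alpha> j = Mx a \<alpha> l z}"
  using assms by (auto simp: actJ_def edom_def polyfun_in_dom)

lemma gen_Pc:
  "finite J \<Longrightarrow> finite I \<Longrightarrow> j \<in> J \<Longrightarrow> (a j, 1) \<in> Pc a b J I"
  "finite J \<Longrightarrow> finite I \<Longrightarrow> i \<in> I \<Longrightarrow> (b i, 0) \<in> Pc a b J I"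
  by (simp_all add: Pc_hull hull_inc)

lemma ev_lt:
  fixes c d :: real
  assumes "c < 0"
  shows "eventually (\<lambda>h. c + h * d < 0) (at_right 0)"
proof -
  have "((\<lambda>h. c + h * d) \<longlongrightarrow> c + 0 * d) (at_right 0)"
    by (intro tendsto_intros)
  then show ?thesis using assms by (simp add: order_tendstoD(2))
qed

lemma stepA:
  assumes l1: "1 \<le> l" and v: "v \<in> subdiff (polyfun a \<alpha> b \<beta> l s) z"
  shows "(v, 1) \<in> Pc a b (actJ (polyfun a \<alpha> b \<beta> l s) a \<alpha> l z) (actI b \<beta> s z)"
proof (rule ccontr)
  define g where "g = polyfun a \<alpha> b \<beta> l s"
  define J where "J = actJ g a \<alpha> l z"
  define I where "I = actI b \<beta> s z"
  define P where "P = Pc a b J I"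
  note dz = subdiff_dom[OF v]
  have Jeq: "J = {j\<in>{1..l}. a j \<bullet> z - \<alpha> j = Mx a \<alpha> l z}"
    unfolding J_def g_def using actJ_eq[OF dz(1)] by simp
  have fin: "finite J" "finite I" unfolding Jeq I_def actI_def by auto
  assume "(v, 1) \<notin> Pc a b (actJ (polyfun a \<alpha> b \<beta> l s) a \<alpha> l z) (actI b \<beta> s z)"
  then have nP: "(v, 1) \<notin> P" unfolding P_def J_def I_def g_def .
  obtain w t where wt: "w \<bullet> (v, 1::real) < t" "\<forall>x\<in>P. w \<bullet> x > t"
    using separating_hyperplane_closed_point[OF _ _ nP] fin unfolding P_def
    by (metis convex_Pc closed_Pc)
  have t0: "t < 0" using wt(2) zero_Pc[OF fin, of a b] unfolding P_def by auto
  have pos: "w \<bullet> x \<ge> 0" if "x \<in> P" for x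
  proof (rule ccontr)
    assume "\<not> 0 \<le> w \<bullet> x"
    then have wx: "w \<bullet> x < 0" by simp
    have "(t / (w \<bullet> x)) *\<^sub>R x \<in> P"
      unfolding P_def
      by (rule cone_Pc[OF fin]) (use that wx t0 in \<open>auto simp: P_def zero_le_divide_iff\<close>)
    then have "w \<bullet> ((t / (w \<bullet> x)) *\<^sub>R x) > t" using wt(2) by blast
    then show False using wx by simp
  qed
  define d where "d = fst w"
  define e where "e = snd w"
  have wsplit: "w \<bullet> (p, q) = d \<bullet> p + e * q" for p q
    unfolding d_def e_def by (cases w) simp
  have hv: "d \<bullet> v + e < 0" using wt(1) t0 wsplit[of v 1] by simp
  have hJ: "d \<bullet> a j + e \<ge> 0" if "j \<in> J" for j
    using pos[OF gen_Pc(1)[OF fin that, of a b, folded P_def]] wsplit[of "a j" 1] by simp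
  have hI: "d \<bullet> b i \<ge> 0" if "i \<in> I" for i
    using pos[OF gen_Pc(2)[OF fin that, of b a, folded P_def]] wsplit[of "b i" 0] by simp
  define u where "u = - d"
  have ev1: "eventually (\<lambda>h. \<forall>i\<in>{1..s} - I. (b i \<bullet> z - \<beta> i) + h * (b i \<bullet> u) < 0) (at_right 0)"
  proof (rule eventually_ball_finite)
    show "finite ({1..s} - I)" by simp
    show "\<forall>i\<in>{1..s} - I. \<forall>\<^sub>F h in at_right 0. b i \<bullet> z - \<beta> i + h * (b i \<bullet> u) < 0"
    proof
      fix i assume "i \<in> {1..s} - I"
      then have "b i \<bullet> z - \<beta> i < 0" using dz(1) unfolding I_def actI_def by force
      then show "\<forall>\<^sub>F h in at_right 0. b i \<bullet> z - \<beta> i + h * (b i \<bullet> u) < 0" by (rule ev_lt)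
    qed
  qed
  have ev2: "eventually (\<lambda>h. \<forall>j\<in>{1..l} - J. (a j \<bullet> z - \<alpha> j - Mx a \<alpha> l z) + h * (a j \<bullet> u - e) < 0) (at_right 0)"
  proof (rule eventually_ball_finite)
    show "finite ({1..l} - J)" by simp
    show "\<forall>j\<in>{1..l} - J. \<forall>\<^sub>F h in at_right 0. (a j \<bullet> z - \<alpha> j - Mx a \<alpha> l z) + h * (a j \<bullet> u - e) < 0"
    proof
      fix j assume jj: "j \<in> {1..l} - J"
      then have "a j \<bullet> z - \<alpha> j \<le> Mx a \<alpha> l z" by (intro Mx_ge) auto
      moreover have "a j \<bullet> z - \<alpha> j \<noteq> Mx a \<alpha> l z" using jj unfolding Jeq by blast
      ultimately have "a j \<bullet> z - \<alpha> j - Mx a \<alpha> l z < 0" by linarith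
      then show "\<forall>\<^sub>F h in at_right 0. (a j \<bullet> z - \<alpha> j - Mx a \<alpha> l z) + h * (a j \<bullet> u - e) < 0" by (rule ev_lt)
    qed
  qed
  have ev3: "eventually (\<lambda>h::real. h > 0) (at_right 0)"
    by (simp add: eventually_at_right_less)
  obtain h where h: "h > 0"
    "\<forall>i\<in>{1..s} - I. (b i \<bullet> z - \<beta> i) + h * (b i \<bullet> u) < 0"
    "\<forall>j\<in>{1..l} - J. (a j \<bullet> z - \<alpha> j - Mx a \<alpha> l z) + h * (a j \<bullet> u - e) < 0"
    using eventually_happens'[OF trivial_limit_at_right_real eventually_conj[OF ev3 eventually_conj[OF ev1 ev2]]]
    by blast
  define y where "y = z + h *\<^sub>R u"
  have ydom: "\<forall>i\<in>{1..s}. b i \<bullet> y \<le> \<beta> i"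
  proof
    fix i assume i: "i \<in> {1..s}"
    show "b i \<bullet> y \<le> \<beta> i"
    proof (cases "i \<in> I")
      case True
      then have "b i \<bullet> z = \<beta> i" unfolding I_def actI_def by auto
      moreover have "b i \<bullet> u \<le> 0" using hI[OF True] unfolding u_def by (simp add: inner_commute)
      ultimately show ?thesis using h(1) unfolding y_def
        by (simp add: inner_add_right mult_nonneg_nonpos)
    next
      case False
      then have "(b i \<bullet> z - \<beta> i) + h * (b i \<bullet> u) < 0" using h(2) i by blast
      then show ?thesis unfolding y_def by (simp add: inner_add_right)
    qed
  qed
  have My: "Mx a \<alpha> l y \<le> Mx a \<alpha> l z + h * e"
  proof (rule Mx_le[OF l1])
    fix j assume j: "j \<in> {1..l}"
    show "a j \<bullet> y - \<alpha> j \<le> Mx a \<alpha> l z + h * e"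
    proof (cases "j \<in> J")
      case True
      then have "a j \<bullet> z - \<alpha> j = Mx a \<alpha> l z" unfolding Jeq by auto
      moreover have "a j \<bullet> u \<le> e" using hJ[OF True] unfolding u_def by (simp add: inner_commute)
      moreover have "h * (a j \<bullet> u) \<le> h * e" using h(1) \<open>a j \<bullet> u \<le> e\<close> by (simp add: mult_left_mono)
      ultimately show ?thesis unfolding y_def
        by (simp add: inner_add_right)
    next
      case False
      then have "(a j \<bullet> z - \<alpha> j - Mx a \<alpha> l z) + h * (a j \<bullet> u - e) < 0" using h(3) j by blast
      then show ?thesis unfolding y_def by (simp add: inner_add_right algebra_simps)
    qed
  qed
  have "Mx a \<alpha> l z + v \<bullet> (y - z) \<le> polyfun a \<alpha> b \<beta> l s y" by (rule dz(3))
  then have "Mx a \<alpha> l z + h * (v \<bullet> u) \<le> Mx a \<alpha> l y"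
  proof -
    assume A: "Mx a \<alpha> l z + v \<bullet> (y - z) \<le> polyfun a \<alpha> b \<beta> l s y"
    have "v \<bullet> (y - z) = h * (v \<bullet> u)" unfolding y_def by simp
    with A show ?thesis by (simp add: polyfun_in_dom[OF ydom])
  qed
  with My have "h * (v \<bullet> u) \<le> h * e" by simp
  then have "v \<bullet> u \<le> e" using h(1) by simp
  then show False using hv unfolding u_def by (simp add: inner_commute)
qed


lemma stepB:
  assumes l1: "1 \<le> l" and lbzb: "lb \<in> subdiff (polyfun a \<alpha> b \<beta> l s) zb"
    and v: "v \<in> subdiff (polyfun a \<alpha> b \<beta> l s) z"
    and P: "(lb, 1) \<in> Pc a b (actJ (polyfun a \<alpha> b \<beta> l s) a \<alpha> l z) (actI b \<beta> s z)"
  shows "Mx a \<alpha> l z = Mx a \<alpha> l zb + lb \<bullet> (z - zb)"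
proof -
  define J where "J = actJ (polyfun a \<alpha> b \<beta> l s) a \<alpha> l z"
  define I where "I = actI b \<beta> s z"
  note dz = subdiff_dom[OF v]
  note dzb = subdiff_dom[OF lbzb]
  have Jeq: "J = {j\<in>{1..l}. a j \<bullet> z - \<alpha> j = Mx a \<alpha> l z}"
    unfolding J_def using actJ_eq[OF dz(1)] by simp
  have fin: "finite J" "finite I" unfolding Jeq I_def actI_def by auto
  obtain c d where cd: "\<forall>j\<in>J. 0 \<le> c j" "\<forall>i\<in>I. 0 \<le> d i"
      "(lb, 1::real) = (\<Sum>j\<in>J. c j *\<^sub>R (a j, 1::real)) + (\<Sum>i\<in>I. d i *\<^sub>R (b i, 0::real))"
    using P unfolding Pc_def J_def I_def by blast
  have lbe: "lb = (\<Sum>j\<in>J. c j *\<^sub>R a j) + (\<Sum>i\<in>I. d i *\<^sub>R b i)"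
    using arg_cong[OF cd(3), of fst] by (simp add: fst_sum)
  have c1: "(\<Sum>j\<in>J. c j) = 1"
    using arg_cong[OF cd(3), of snd] by (simp add: snd_sum)
  have "lb \<bullet> (zb - z) = (\<Sum>j\<in>J. c j * (a j \<bullet> (zb - z))) + (\<Sum>i\<in>I. d i * (b i \<bullet> (zb - z)))"
    unfolding lbe by (simp add: inner_add_left inner_sum_left)
  also have "\<dots> \<le> (\<Sum>j\<in>J. c j * (Mx a \<alpha> l zb - Mx a \<alpha> l z)) + 0"
  proof (rule add_mono)
    show "(\<Sum>j\<in>J. c j * (a j \<bullet> (zb - z))) \<le> (\<Sum>j\<in>J. c j * (Mx a \<alpha> l zb - Mx a \<alpha> l z))"
    proof (rule sum_mono)
      fix j assume j: "j \<in> J"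
      then have "a j \<bullet> z - \<alpha> j = Mx a \<alpha> l z" "j \<in> {1..l}" unfolding Jeq by auto
      moreover have "a j \<bullet> zb - \<alpha> j \<le> Mx a \<alpha> l zb" using \<open>j \<in> {1..l}\<close> by (rule Mx_ge)
      moreover have "a j \<bullet> (zb - z) = a j \<bullet> zb - a j \<bullet> z" by (simp add: inner_diff_right)
      ultimately have "a j \<bullet> (zb - z) \<le> Mx a \<alpha> l zb - Mx a \<alpha> l z" by linarith
      then show "c j * (a j \<bullet> (zb - z)) \<le> c j * (Mx a \<alpha> l zb - Mx a \<alpha> l z)"
        using cd(1) j by (simp add: mult_left_mono)
    qed
    show "(\<Sum>i\<in>I. d i * (b i \<bullet> (zb - z))) \<le> 0"
    proof (rule sum_nonpos)
      fix i assume i: "i \<in> I"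
      then have "b i \<bullet> z = \<beta> i" "i \<in> {1..s}" unfolding I_def actI_def by auto
      then have "b i \<bullet> (zb - z) \<le> 0" using dzb(1) by (simp add: inner_diff_right)
      then show "d i * (b i \<bullet> (zb - z)) \<le> 0" using cd(2) i by (simp add: mult_nonneg_nonpos)
    qed
  qed
  also have "\<dots> = Mx a \<alpha> l zb - Mx a \<alpha> l z"
    by (simp add: sum_distrib_right[symmetric] c1)
  finally have A: "lb \<bullet> (zb - z) \<le> Mx a \<alpha> l zb - Mx a \<alpha> l z" .
  have "Mx a \<alpha> l zb + lb \<bullet> (z - zb) \<le> polyfun a \<alpha> b \<beta> l s z" by (rule dzb(3))
  then have B: "Mx a \<alpha> l zb + lb \<bullet> (z - zb) \<le> Mx a \<alpha> l z" by (simp add: dz(2))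
  have "lb \<bullet> (zb - z) = - (lb \<bullet> (z - zb))" by (simp add: inner_diff_right)
  with A B show ?thesis by linarith
qed

theorem lemma2p1:
  fixes a b :: "nat \<Rightarrow> real^'m" and \<alpha> \<beta> :: "nat \<Rightarrow> real" and l s :: nat
    and g :: "real^'m \<Rightarrow> ereal" and zb lb :: "real^'m"
  assumes "l \<ge> 1"
    and "g = polyfun a \<alpha> b \<beta> l s"
    and "(zb, lb) \<in> gph_subdiff g"
  shows "\<exists>r>0. \<forall>\<sigma> \<tau>.
           ((\<forall>j\<in>actJ g a \<alpha> l zb. \<sigma> j \<ge> 0) \<and> (\<forall>i\<in>actI b \<beta> s zb. \<tau> i \<ge> 0) \<and>
            (\<Sum>j\<in>actJ g a \<alpha> l zb. \<sigma> j) = 1 \<and>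
            lb = (\<Sum>j\<in>actJ g a \<alpha> l zb. \<sigma> j *\<^sub>R a j) + (\<Sum>i\<in>actI b \<beta> s zb. \<tau> i *\<^sub>R b i))
           \<longrightarrow> (\<forall>z v. (z, v) \<in> gph_subdiff g \<and> (z, v) \<in> cball (zb, lb) r \<longrightarrow>
                 {j\<in>actJ g a \<alpha> l zb. \<sigma> j > 0} \<subseteq> actJ g a \<alpha> l z \<and>
                 {i\<in>actI b \<beta> s zb. \<tau> i > 0} \<subseteq> actI b \<beta> s z)"
proof -
  have lbzb: "lb \<in> subdiff (polyfun a \<alpha> b \<beta> l s) zb" using assms(2,3) by (simp add: gph_subdiff_def)
  define Pairs where "Pairs = {p. fst p \<subseteq> {1..l} \<and> snd p \<subseteq> {1..s} \<and> (lb, 1::real) \<notin> Pc a b (fst p) (snd p)}"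
  have finP: "finite Pairs"
    by (rule finite_subset[of _ "Pow {1..l} \<times> Pow {1..s}"]) (auto simp: Pairs_def)
  define D where "D p = infdist (lb, 1::real) (Pc a b (fst p) (snd p))" for p
  have Dpos: "D p > 0" if "p \<in> Pairs" for p
  proof -
    have fin: "finite (fst p)" "finite (snd p)" using that unfolding Pairs_def
      by (auto intro: finite_subset)
    show ?thesis unfolding D_def
      by (rule infdist_pos_not_in_closed) (use that fin zero_Pc[OF fin, of a b] closed_Pc[OF fin, of a b] in \<open>auto simp: Pairs_def\<close>)
  qed
  define r where "r = Min (insert 1 (D ` Pairs)) / 2"
  have r0: "r > 0" unfolding r_def using finP Dpos by (simp add: Min_gr_iff)
  have rD: "r < D p" if "p \<in> Pairs" for p
  proof -
    have "Min (insert 1 (D ` Pairs)) \<le> D p" using finP that by (simp add: Min_le_iff)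
    moreover have "Min (insert 1 (D ` Pairs)) > 0" using finP Dpos by (simp add: Min_gr_iff)
    ultimately show ?thesis unfolding r_def by simp
  qed
  show ?thesis
  proof (intro exI[of _ r] conjI allI impI r0)
    fix \<sigma> \<tau> z v
    assume dec: "(\<forall>j\<in>actJ g a \<alpha> l zb. \<sigma> j \<ge> 0) \<and> (\<forall>i\<in>actI b \<beta> s zb. \<tau> i \<ge> 0) \<and>
            (\<Sum>j\<in>actJ g a \<alpha> l zb. \<sigma> j) = 1 \<and>
            lb = (\<Sum>j\<in>actJ g a \<alpha> l zb. \<sigma> j *\<^sub>R a j) + (\<Sum>i\<in>actI b \<beta> s zb. \<tau> i *\<^sub>R b i)"
    assume zv: "(z, v) \<in> gph_subdiff g \<and> (z, v) \<in> cball (zb, lb) r"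
    have v: "v \<in> subdiff (polyfun a \<alpha> b \<beta> l s) z" using zv assms(2) by (simp add: gph_subdiff_def)
    note dz = subdiff_dom[OF v]
    note dzb = subdiff_dom[OF lbzb]
    define J0 where "J0 = actJ g a \<alpha> l zb"
    define I0 where "I0 = actI b \<beta> s zb"
    have J0eq: "J0 = {j\<in>{1..l}. a j \<bullet> zb - \<alpha> j = Mx a \<alpha> l zb}"
      unfolding J0_def assms(2) using actJ_eq[OF dzb(1)] by simp
    have Jzeq: "actJ g a \<alpha> l z = {j\<in>{1..l}. a j \<bullet> z - \<alpha> j = Mx a \<alpha> l z}"
      unfolding assms(2) using actJ_eq[OF dz(1)] by simp
    have fin0: "finite J0" "finite I0" unfolding J0eq I0_def actI_def by auto
    have inP: "(lb, 1) \<in> Pc a b (actJ (polyfun a \<alpha> b \<beta> l s) a \<alpha> l z) (actI b \<beta> s z)"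
    proof (rule ccontr)
      assume nin: "(lb, 1) \<notin> Pc a b (actJ (polyfun a \<alpha> b \<beta> l s) a \<alpha> l z) (actI b \<beta> s z)"
      define p where "p = (actJ (polyfun a \<alpha> b \<beta> l s) a \<alpha> l z, actI b \<beta> s z)"
      have pP: "p \<in> Pairs" unfolding Pairs_def p_def using nin by (auto simp: actJ_def actI_def)
      have vin: "(v, 1) \<in> Pc a b (fst p) (snd p)" unfolding p_def using stepA[OF assms(1) v] by simp
      have "D p \<le> dist (lb, 1::real) (v, 1)" unfolding D_def by (rule infdist_le[OF vin])
      also have "\<dots> = dist lb v" by (simp add: dist_Pair_Pair)
      also have "\<dots> \<le> dist (zb, lb) (z, v)" using dist_snd_le[of "(zb, lb)" "(z, v)"] by simp
      also have "\<dots> \<le> r" using zv by simp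
      finally show False using rD[OF pP] by simp
    qed
    have E: "Mx a \<alpha> l z = Mx a \<alpha> l zb + lb \<bullet> (z - zb)"
      by (rule stepB[OF assms(1) lbzb v inP])
    define A where "A j = a j \<bullet> z - \<alpha> j - Mx a \<alpha> l z" for j
    define B where "B i = b i \<bullet> z - \<beta> i" for i
    have Ale: "A j \<le> 0" if "j \<in> J0" for j using that Mx_ge[of j l a z \<alpha>] unfolding A_def J0eq by auto
    have Ble: "B i \<le> 0" if "i \<in> I0" for i using that dz(1) unfolding B_def I0_def actI_def by auto
    have "lb \<bullet> (z - zb) = (\<Sum>j\<in>J0. \<sigma> j * (a j \<bullet> (z - zb))) + (\<Sum>i\<in>I0. \<tau> i * (b i \<bullet> (z - zb)))"
      using dec unfolding J0_def[symmetric] I0_def[symmetric]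
      by (simp add: inner_add_left inner_sum_left)
    also have "(\<Sum>j\<in>J0. \<sigma> j * (a j \<bullet> (z - zb))) = (\<Sum>j\<in>J0. \<sigma> j * A j + \<sigma> j * (Mx a \<alpha> l z - Mx a \<alpha> l zb))"
      by (rule sum.cong) (auto simp: A_def J0eq inner_diff_right algebra_simps)
    also have "\<dots> = (\<Sum>j\<in>J0. \<sigma> j * A j) + (Mx a \<alpha> l z - Mx a \<alpha> l zb)"
      using dec unfolding J0_def[symmetric] by (simp add: sum.distrib sum_distrib_right[symmetric])
    also have "(\<Sum>i\<in>I0. \<tau> i * (b i \<bullet> (z - zb))) = (\<Sum>i\<in>I0. \<tau> i * B i)"
      by (rule sum.cong) (auto simp: B_def I0_def actI_def inner_diff_right)
    finally have "(\<Sum>j\<in>J0. \<sigma> j * A j) + (\<Sum>i\<in>I0. \<tau> i * B i) = 0" using E by linarith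
    moreover have s1: "(\<Sum>j\<in>J0. \<sigma> j * A j) \<le> 0"
      by (rule sum_nonpos) (use dec Ale in \<open>auto simp: J0_def mult_nonneg_nonpos\<close>)
    moreover have s2: "(\<Sum>i\<in>I0. \<tau> i * B i) \<le> 0"
      by (rule sum_nonpos) (use dec Ble in \<open>auto simp: I0_def mult_nonneg_nonpos\<close>)
    ultimately have z1: "(\<Sum>j\<in>J0. - (\<sigma> j * A j)) = 0" and z2: "(\<Sum>i\<in>I0. - (\<tau> i * B i)) = 0"
      by (simp_all add: sum_negf)
    have t1: "\<sigma> j * A j = 0" if "j \<in> J0" for j
    proof -
      have "\<forall>j\<in>J0. - (\<sigma> j * A j) = 0"
        by (rule iffD1[OF sum_nonneg_eq_0_iff[OF fin0(1)] z1])
           (use dec Ale in \<open>auto simp: J0_def mult_nonneg_nonpos\<close>)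
      then show ?thesis using that by simp
    qed
    have t2: "\<tau> i * B i = 0" if "i \<in> I0" for i
    proof -
      have "\<forall>i\<in>I0. - (\<tau> i * B i) = 0"
        by (rule iffD1[OF sum_nonneg_eq_0_iff[OF fin0(2)] z2])
           (use dec Ble in \<open>auto simp: I0_def mult_nonneg_nonpos\<close>)
      then show ?thesis using that by simp
    qed
    show "{j\<in>actJ g a \<alpha> l zb. \<sigma> j > 0} \<subseteq> actJ g a \<alpha> l z"
    proof
      fix j assume "j \<in> {j\<in>actJ g a \<alpha> l zb. \<sigma> j > 0}"
      then have j: "j \<in> J0" "\<sigma> j > 0" unfolding J0_def by auto
      then have "A j = 0" using t1[OF j(1)] by simp
      then show "j \<in> actJ g a \<alpha> l z" using j(1) unfolding Jzeq A_def J0eq by auto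
    qed
    show "{i\<in>actI b \<beta> s zb. \<tau> i > 0} \<subseteq> actI b \<beta> s z"
    proof
      fix i assume "i \<in> {i\<in>actI b \<beta> s zb. \<tau> i > 0}"
      then have i: "i \<in> I0" "\<tau> i > 0" unfolding I0_def by auto
      then have "B i = 0" using t2[OF i(1)] by simp
      then show "i \<in> actI b \<beta> s z" using i(1) unfolding B_def I0_def actI_def by auto
    qed
  qed
qed

end
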